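(* Let $P$ be a dcpo such that $\Sigma P$ is well-filtered. The following are equivalent: (1) $\Sigma P$ is locally compact. (2) $\mathsf{K}(\Sigma P)$ is a continuous semilattice, and the upper Vietoris topology and the Scott topology on $\mathsf{K}(\Sigma P)$ coincide. (3) $\mathsf{K}(\Sigma P)$ is a continuous semilattice, and $\Sigma P$ has property Q. (4) $\mathsf{K}(\Sigma P)$ is a continuous semilattice. (5) $\Sigma P$ is core compact.
   Context: A dcpo is a poset in which every directed subset has a supremum. For a poset $Q$, the Scott topology consists of upper sets $U$ such that every directed $D$ whose supremum exists and lies in $U$ meets $U$; $\Sigma Q$ is $Q$ with its Scott topology. For a $T_0$ space $X$: specialization order $x\le y$ iff $x\in\overline{\{y\}}$; saturated = upper set; $\mathsf{K}(X)$ is the set of nonempty compact saturated subsets ordered by reverse inclusion (suprema of families, when they exist, are intersections, which exist iff the intersection is in $\mathsf{K}(X)$); $a\ll b$ in a poset means for every directed $D$ with existing $\bigvee D\ge b$ some $d\in D$ has $d\ge a$; $\mathsf{K}(X)$ is a continuous semilattice if it is directed complete and each $K$ is the directed supremum of $\{L: L\ll K\}$. Upper Vietoris topology on $\mathsf{K}(X)$: base $\{\Box U\}$ with $\Box U=\{K: K\subseteq U\}$, $U$ open. $X$ is well-filtered if for every open $U$ and every family $\mathcal K\subseteq \mathsf{K}(X)$ filtered under inclusion, $\bigcap\mathcal K\subseteq U$ implies some $K\in\mathcal K$ is contained in $U$. Property Q: for all $K_1,K_2\in\mathsf{K}(X)$, $K_1\ll K_2$ iff $K_2\subseteq\operatorname{int}K_1$.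 Locally compact: each point has a neighborhood base of compact sets. Core compact: the lattice of open sets is a continuous lattice. *)

theory Defs
  imports "HOL-Analysis.Analysis"
begin

definition directed_in :: "'a set \<Rightarrow> ('a \<Rightarrow> 'a \<Rightarrow> bool) \<Rightarrow> 'a set \<Rightarrow> bool" where
  "directed_in S le D \<longleftrightarrow> D \<subseteq> S \<and> D \<noteq> {} \<and>
     (\<forall>x\<in>D. \<forall>y\<in>D. \<exists>z\<in>D. le x z \<and> le y z)"

definition is_sup_in :: "'a set \<Rightarrow> ('a \<Rightarrow> 'a \<Rightarrow> bool) \<Rightarrow> 'a set \<Rightarrow> 'a \<Rightarrow> bool" where
  "is_sup_in S le D s \<longleftrightarrow> s \<in> S \<and> (\<forall>d\<in>D. le d s) \<and>
     (\<forall>u\<in>S. (\<forall>d\<in>D. le d u) \<longrightarrow> le s u)"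

definition dcpo_on :: "'a set \<Rightarrow> ('a \<Rightarrow> 'a \<Rightarrow> bool) \<Rightarrow> bool" where
  "dcpo_on S le \<longleftrightarrow> (\<forall>D. directed_in S le D \<longrightarrow> (\<exists>s. is_sup_in S le D s))"

definition scott_open :: "'a set \<Rightarrow> ('a \<Rightarrow> 'a \<Rightarrow> bool) \<Rightarrow> 'a set \<Rightarrow> bool" where
  "scott_open S le U \<longleftrightarrow> U \<subseteq> S \<and> (\<forall>x\<in>U. \<forall>y\<in>S. le x y \<longrightarrow> y \<in> U) \<and>
     (\<forall>D s. directed_in S le D \<and> is_sup_in S le D s \<and> s \<in> U \<longrightarrow> D \<inter> U \<noteq> {})"

definition scott_topology :: "'a set \<Rightarrow> ('a \<Rightarrow> 'a \<Rightarrow> bool) \<Rightarrow> 'a topology" where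
  "scott_topology S le = topology (scott_open S le)"

definition way_below_in :: "'a set \<Rightarrow> ('a \<Rightarrow> 'a \<Rightarrow> bool) \<Rightarrow> 'a \<Rightarrow> 'a \<Rightarrow> bool" where
  "way_below_in S le a b \<longleftrightarrow>
     (\<forall>D s. directed_in S le D \<and> is_sup_in S le D s \<and> le b s \<longrightarrow> (\<exists>d\<in>D. le a d))"

definition Sigma_space :: "('a::order) topology" where
  "Sigma_space = scott_topology UNIV (\<le>)"

text \<open>Saturated = upper set in the specialization order (x \<le> y iff x \<in> closure {y}).\<close>
definition saturated_in :: "'a topology \<Rightarrow> 'a set \<Rightarrow> bool" where
  "saturated_in X A \<longleftrightarrow> A \<subseteq> topspace X \<and>
     (\<forall>x\<in>A. \<forall>y\<in>topspace X. x \<in> X closure_of {y} \<longrightarrow> y \<in> A)"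

definition KX :: "'a topology \<Rightarrow> 'a set set" where
  "KX X = {K. K \<noteq> {} \<and> compactin X K \<and> saturated_in X K}"

definition rev_incl :: "'a set \<Rightarrow> 'a set \<Rightarrow> bool" where
  "rev_incl K L \<longleftrightarrow> L \<subseteq> K"

definition filtered_family :: "'a set set \<Rightarrow> bool" where
  "filtered_family \<K> \<longleftrightarrow> \<K> \<noteq> {} \<and>
     (\<forall>K1\<in>\<K>. \<forall>K2\<in>\<K>. \<exists>K3\<in>\<K>. K3 \<subseteq> K1 \<and> K3 \<subseteq> K2)"

definition well_filtered :: "'a topology \<Rightarrow> bool" where
  "well_filtered X \<longleftrightarrow>
     (\<forall>U \<K>. openin X U \<and> \<K> \<subseteq> KX X \<and> filtered_family \<K> \<and> \<Inter>\<K> \<subseteq> U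
        \<longrightarrow> (\<exists>K\<in>\<K>. K \<subseteq> U))"

definition continuous_semilattice_on :: "'a set \<Rightarrow> ('a \<Rightarrow> 'a \<Rightarrow> bool) \<Rightarrow> bool" where
  "continuous_semilattice_on S le \<longleftrightarrow> dcpo_on S le \<and>
     (\<forall>x\<in>S. directed_in S le {y\<in>S. way_below_in S le y x} \<and>
             is_sup_in S le {y\<in>S. way_below_in S le y x} x)"

definition Box_set :: "'a topology \<Rightarrow> 'a set \<Rightarrow> 'a set set" where
  "Box_set X U = {K\<in>KX X. K \<subseteq> U}"

definition upper_vietoris :: "'a topology \<Rightarrow> 'a set topology" where
  "upper_vietoris X = topology_generated_by {Box_set X U | U. openin X U}"

definition property_Q :: "'a topology \<Rightarrow> bool" where
  "property_Q X \<longleftrightarrow> (\<forall>K1\<in>KX X. \<forall>K2\<in>KX X.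
     way_below_in (KX X) rev_incl K1 K2 \<longleftrightarrow> K2 \<subseteq> X interior_of K1)"

definition locally_compact_nb :: "'a topology \<Rightarrow> bool" where
  "locally_compact_nb X \<longleftrightarrow> neighbourhood_base_of (compactin X) X"

text \<open>Continuous lattice (the lattice of opens is complete, so only the approximation
  property is required): every element is the supremum of the elements way below it.\<close>
definition core_compact :: "'a topology \<Rightarrow> bool" where
  "core_compact X \<longleftrightarrow>
     (let Opens = {U. openin X U} in
      \<forall>U\<in>Opens. is_sup_in Opens (\<subseteq>) {V\<in>Opens. way_below_in Opens (\<subseteq>) V U} U)"

end

theory Submission
  imports Defs
begin


definition upper :: "('a::order) set \<Rightarrow> bool" where
  "upper A \<longleftrightarrow> (\<forall>x\<in>A. \<forall>y. x \<le> y \<longrightarrow> y \<in> A)"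

lemma istop_scott: "istopology (scott_open S le)"
  unfolding istopology_def
proof (intro conjI allI impI)
  fix U V assume U: "scott_open S le U" and V: "scott_open S le V"
  show "scott_open S le (U \<inter> V)"
    unfolding scott_open_def
  proof (intro conjI allI impI ballI)
    show "U \<inter> V \<subseteq> S" using U unfolding scott_open_def by auto
  next
    fix x y assume "x \<in> U \<inter> V" "y \<in> S" "le x y" then show "y \<in> U \<inter> V"
      using U V unfolding scott_open_def by blast
  next
    fix D s assume a: "directed_in S le D \<and> is_sup_in S le D s \<and> s \<in> U \<inter> V"
    then obtain d1 where d1: "d1 \<in> D" "d1 \<in> U" using U unfolding scott_open_def by blast
    obtain d2 where d2: "d2 \<in> D" "d2 \<in> V" using a V unfolding scott_open_def by blast
    obtain d3 where d3: "d3 \<in> D" "le d1 d3" "le d2 d3" using a d1 d2 unfolding directed_in_def by blast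
    have "d3 \<in> S" using a d3 unfolding directed_in_def by blast
    then have "d3 \<in> U \<inter> V" using U V d1 d2 d3 unfolding scott_open_def by blast
    then show "D \<inter> (U \<inter> V) \<noteq> {}" using d3 by blast
  qed
next
  fix K assume K: "\<forall>U\<in>K. scott_open S le U"
  show "scott_open S le (\<Union>K)"
    unfolding scott_open_def
  proof (intro conjI allI impI ballI)
    show "\<Union>K \<subseteq> S" using K unfolding scott_open_def by auto
  next
    fix x y assume "x \<in> \<Union>K" "y \<in> S" "le x y" then show "y \<in> \<Union>K"
      using K unfolding scott_open_def by blast
  next
    fix D s assume a: "directed_in S le D \<and> is_sup_in S le D s \<and> s \<in> \<Union>K"
    then obtain U where U: "U \<in> K" "s \<in> U" by blast
    then have "scott_open S le U" using K by blast
    then have "D \<inter> U \<noteq> {}" using a U unfolding scott_open_def by blast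
    then show "D \<inter> \<Union>K \<noteq> {}" using U by blast
  qed
qed

lemma openin_scott_topology: "openin (scott_topology S le) U \<longleftrightarrow> scott_open S le U"
  by (simp add: scott_topology_def istop_scott)

lemma openin_Sigma: "openin (Sigma_space::'a::order topology) U \<longleftrightarrow> scott_open UNIV (\<le>) U"
  by (simp add: Sigma_space_def openin_scott_topology)

lemma open_upper: "openin (Sigma_space::'a::order topology) U \<Longrightarrow> upper U"
  unfolding openin_Sigma scott_open_def upper_def by blast

lemma topspace_Sigma: "topspace (Sigma_space::'a::order topology) = UNIV"
proof -
  have "openin (Sigma_space::'a topology) UNIV"
    unfolding openin_Sigma scott_open_def directed_in_def by auto
  then show ?thesis by (metis openin_subset top.extremum_unique)
qed

lemma open_notbelow: "openin (Sigma_space::'a::order topology) {z. \<not> z \<le> y}"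
  unfolding openin_Sigma scott_open_def
proof (intro conjI allI impI ballI)
  fix D s assume a: "directed_in UNIV (\<le>) D \<and> is_sup_in UNIV (\<le>) D s \<and> s \<in> {z. \<not> z \<le> y}"
  show "D \<inter> {z. \<not> z \<le> y} \<noteq> {}"
  proof
    assume "D \<inter> {z. \<not> z \<le> y} = {}"
    then have "\<forall>d\<in>D. d \<le> y" by blast
    then have "s \<le> y" using a unfolding is_sup_in_def by blast
    then show False using a by simp
  qed
qed (auto intro: order_trans)

lemma closure_Sigma: "x \<in> (Sigma_space::'a::order topology) closure_of {y} \<longleftrightarrow> x \<le> y"
proof
  assume a: "x \<in> Sigma_space closure_of {y}"
  show "x \<le> y"
  proof (rule ccontr)
    assume "\<not> x \<le> y"
    then have "x \<in> {z. \<not> z \<le> y}" by simp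
    then have "\<exists>z. z \<in> {y} \<and> z \<in> {z. \<not> z \<le> y}"
      using a open_notbelow[of y] unfolding in_closure_of by (metis (no_types, lifting))
    then show False by simp
  qed
next
  assume xy: "x \<le> y"
  have "\<And>T. x \<in> T \<Longrightarrow> openin Sigma_space T \<Longrightarrow> y \<in> T"
  proof -
    fix T assume "x \<in> T" "openin Sigma_space T"
    then have "upper T" by (simp add: open_upper)
    then show "y \<in> T" using xy \<open>x \<in> T\<close> unfolding upper_def by blast
  qed
  then show "x \<in> Sigma_space closure_of {y}"
    unfolding in_closure_of topspace_Sigma by (metis UNIV_I singletonI)
qed

lemma saturated_Sigma: "saturated_in (Sigma_space::'a::order topology) A \<longleftrightarrow> upper A"
  unfolding saturated_in_def topspace_Sigma closure_Sigma upper_def by auto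


lemma compact_Sigma: "compactin (Sigma_space::'a::order topology) K \<longleftrightarrow>
   (\<forall>\<U>. (\<forall>U\<in>\<U>. openin Sigma_space U) \<and> K \<subseteq> \<Union>\<U> \<longrightarrow> (\<exists>\<F>. finite \<F> \<and> \<F> \<subseteq> \<U> \<and> K \<subseteq> \<Union>\<F>))"
  by (simp add: compactin_def topspace_Sigma)

lemma KX_Sigma: "K \<in> KX (Sigma_space::'a::order topology) \<longleftrightarrow>
   K \<noteq> {} \<and> compactin Sigma_space K \<and> upper K"
  by (simp add: KX_def saturated_Sigma)

definition up :: "('a::order) set \<Rightarrow> 'a set" where "up C = {y. \<exists>x\<in>C. x \<le> y}"

lemma compact_up: assumes "compactin (Sigma_space::'a::order topology) C"
  shows "compactin (Sigma_space::'a::order topology) (up C)"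
  unfolding compact_Sigma
proof (intro allI impI)
  fix \<U> assume a: "(\<forall>U\<in>\<U>. openin Sigma_space U) \<and> up C \<subseteq> \<Union>\<U>"
  then have "C \<subseteq> \<Union>\<U>" unfolding up_def by auto
  then obtain \<F> where F: "finite \<F>" "\<F> \<subseteq> \<U>" "C \<subseteq> \<Union>\<F>" using assms a unfolding compact_Sigma by meson
  have "up C \<subseteq> \<Union>\<F>"
  proof
    fix y assume "y \<in> up C" then obtain x where "x \<in> C" "x \<le> y" unfolding up_def by auto
    then obtain U where "U \<in> \<F>" "x \<in> U" using F by auto
    then show "y \<in> \<Union>\<F>" using open_upper[of U] a F \<open>x \<le> y\<close> unfolding upper_def by blast
  qed
  then show "\<exists>\<F>. finite \<F> \<and> \<F> \<subseteq> \<U> \<and> up C \<subseteq> \<Union>\<F>" using F by blast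
qed

lemma upper_up: "upper (up C)" unfolding upper_def up_def by (auto intro: order_trans)
lemma sub_up: "C \<subseteq> up C" unfolding up_def by auto

lemma upx_KX: "{y. x \<le> y} \<in> KX (Sigma_space::'a::order topology)"
proof -
  have "compactin (Sigma_space::'a topology) {x}" by (simp add: topspace_Sigma)
  moreover have "up {x} = {y. x \<le> y}" unfolding up_def by auto
  ultimately show ?thesis unfolding KX_Sigma using compact_up[of "{x}"] upper_up[of "{x}"] by auto
qed



locale po_on =
  fixes S :: "'b set" and le :: "'b \<Rightarrow> 'b \<Rightarrow> bool"
  assumes refl: "x \<in> S \<Longrightarrow> le x x"
    and trans: "x \<in> S \<Longrightarrow> y \<in> S \<Longrightarrow> z \<in> S \<Longrightarrow> le x y \<Longrightarrow> le y z \<Longrightarrow> le x z"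
begin

lemma directed_single: "x \<in> S \<Longrightarrow> directed_in S le {x}"
  unfolding directed_in_def using refl by auto

lemma sup_single: "x \<in> S \<Longrightarrow> is_sup_in S le {x} x"
  unfolding is_sup_in_def using refl by auto

lemma wb_le: assumes "way_below_in S le a b" "b \<in> S" shows "le a b"
  using assms(1) directed_single[OF assms(2)] sup_single[OF assms(2)] refl[OF assms(2)]
  unfolding way_below_in_def by blast

lemma wb_right: assumes "way_below_in S le a b" "le b c" "b \<in> S" "c \<in> S"
  shows "way_below_in S le a c"
  unfolding way_below_in_def
proof (intro allI impI)
  fix D s assume a: "directed_in S le D \<and> is_sup_in S le D s \<and> le c s"
  then have "s \<in> S" unfolding is_sup_in_def by blast
  then have "le b s" using trans[OF assms(3,4)] a assms(2) by blast
  then show "\<exists>d\<in>D. le a d" using assms(1) a unfolding way_below_in_def by blast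
qed

lemma wb_left: assumes "le a b" "way_below_in S le b c" "a \<in> S" "b \<in> S"
  shows "way_below_in S le a c"
  unfolding way_below_in_def
proof (intro allI impI)
  fix D s assume a: "directed_in S le D \<and> is_sup_in S le D s \<and> le c s"
  then obtain d where d: "d \<in> D" "le b d" using assms(2) unfolding way_below_in_def by blast
  then have "d \<in> S" using a unfolding directed_in_def by blast
  then have "le a d" using trans[OF assms(3,4)] d assms(1) by blast
  then show "\<exists>d\<in>D. le a d" using d by blast
qed

definition wbset where "wbset x = {y\<in>S. way_below_in S le y x}"

lemma interpolate:
  assumes cont: "\<And>x. x \<in> S \<Longrightarrow> directed_in S le (wbset x) \<and> is_sup_in S le (wbset x) x"
    and ac: "way_below_in S le a c" and aS: "a \<in> S" and cS: "c \<in> S"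
  shows "\<exists>b\<in>S. way_below_in S le a b \<and> way_below_in S le b c"
proof -
  define E where "E = {y\<in>S. \<exists>z\<in>S. way_below_in S le y z \<and> way_below_in S le z c}"
  have dirc: "directed_in S le (wbset c)" and supc: "is_sup_in S le (wbset c) c" using cont cS by auto
  have ES: "E \<subseteq> S" unfolding E_def by blast
  have Ene: "E \<noteq> {}"
  proof -
    obtain z where z: "z \<in> wbset c" using dirc unfolding directed_in_def by blast
    then have zS: "z \<in> S" unfolding wbset_def by blast
    obtain y where y: "y \<in> wbset z" using cont[OF zS] unfolding directed_in_def by blast
    then have "y \<in> E" using z zS unfolding E_def wbset_def by blast
    then show ?thesis by blast
  qed
  have Edir: "\<forall>x\<in>E. \<forall>y\<in>E. \<exists>z\<in>E. le x z \<and> le y z"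
  proof (intro ballI)
    fix y1 y2 assume y1: "y1 \<in> E" and y2: "y2 \<in> E"
    obtain z1 where z1: "z1 \<in> S" "way_below_in S le y1 z1" "way_below_in S le z1 c" using y1 unfolding E_def by blast
    obtain z2 where z2: "z2 \<in> S" "way_below_in S le y2 z2" "way_below_in S le z2 c" using y2 unfolding E_def by blast
    have "z1 \<in> wbset c" "z2 \<in> wbset c" using z1 z2 unfolding wbset_def by auto
    then obtain z3 where z3: "z3 \<in> wbset c" "le z1 z3" "le z2 z3" using dirc unfolding directed_in_def by blast
    have z3S: "z3 \<in> S" using z3 unfolding wbset_def by blast
    have y1S: "y1 \<in> S" and y2S: "y2 \<in> S" using y1 y2 ES by auto
    have w1: "way_below_in S le y1 z3" using wb_right[OF z1(2) z3(2) z1(1) z3S] .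
    have w2: "way_below_in S le y2 z3" using wb_right[OF z2(2) z3(3) z2(1) z3S] .
    have d3: "directed_in S le (wbset z3)" and s3: "is_sup_in S le (wbset z3) z3" using cont[OF z3S] by auto
    obtain v1 where v1: "v1 \<in> wbset z3" "le y1 v1" using w1 d3 s3 refl[OF z3S] unfolding way_below_in_def by blast
    obtain v2 where v2: "v2 \<in> wbset z3" "le y2 v2" using w2 d3 s3 refl[OF z3S] unfolding way_below_in_def by blast
    obtain v where v: "v \<in> wbset z3" "le v1 v" "le v2 v" using d3 v1 v2 unfolding directed_in_def by blast
    have vS: "v \<in> S" "v1 \<in> S" "v2 \<in> S" using v v1 v2 unfolding wbset_def by auto
    have "v \<in> E" using v z3 z3S unfolding E_def wbset_def by blast
    moreover have "le y1 v" using trans[OF y1S vS(2) vS(1)] v1 v by blast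
    moreover have "le y2 v" using trans[OF y2S vS(3) vS(1)] v2 v by blast
    ultimately show "\<exists>z\<in>E. le y1 z \<and> le y2 z" by blast
  qed
  have Edir': "directed_in S le E" unfolding directed_in_def using ES Ene Edir by blast
  have Esup: "is_sup_in S le E c"
    unfolding is_sup_in_def
  proof (intro conjI ballI impI)
    show "c \<in> S" by fact
  next
    fix y assume "y \<in> E"
    then obtain z where z: "y \<in> S" "z \<in> S" "way_below_in S le y z" "way_below_in S le z c" unfolding E_def by blast
    have "le y z" using wb_le[OF z(3) z(2)] .
    moreover have "le z c" using wb_le[OF z(4) cS] .
    ultimately show "le y c" using trans[OF z(1) z(2) cS] by blast
  next
    fix u assume uS: "u \<in> S" and ub: "\<forall>d\<in>E. le d u"
    have "\<forall>z\<in>wbset c. le z u"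
    proof
      fix z assume z: "z \<in> wbset c"
      then have zS: "z \<in> S" unfolding wbset_def by blast
      have "\<forall>y\<in>wbset z. le y u" using ub z zS unfolding E_def wbset_def by blast
      then show "le z u" using cont[OF zS] uS unfolding is_sup_in_def by blast
    qed
    then show "le c u" using supc uS unfolding is_sup_in_def by blast
  qed
  obtain y where y: "y \<in> E" "le a y" using ac Edir' Esup refl[OF cS] unfolding way_below_in_def by blast
  then obtain z where z: "y \<in> S" "z \<in> S" "way_below_in S le y z" "way_below_in S le z c" unfolding E_def by blast
  have "way_below_in S le a z" using wb_left[OF y(2) z(3) aS z(1)] .
  then show ?thesis using z by blast
qed

end


abbreviation SX :: "('a::order) topology" where "SX \<equiv> Sigma_space"

lemma po_KX: "po_on (KX X) rev_incl"
  by unfold_locales (auto simp: rev_incl_def)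

lemma po_opens: "po_on {U. openin X U} (\<subseteq>)"
  by unfold_locales auto

lemma KX_sub: "K \<in> KX (SX::'a::order topology) \<Longrightarrow> upper K \<and> K \<noteq> {} \<and> compactin SX K"
  by (simp add: KX_Sigma)

lemma wf_rule: "well_filtered X \<Longrightarrow> openin X U \<Longrightarrow> \<K> \<subseteq> KX X \<Longrightarrow> filtered_family \<K>
   \<Longrightarrow> \<Inter>\<K> \<subseteq> U \<Longrightarrow> \<exists>K\<in>\<K>. K \<subseteq> U"
  unfolding well_filtered_def by blast

lemma wf_inter:
  fixes \<K> :: "'a::order set set"
  assumes WF: "well_filtered (SX::'a::order topology)"
    and sub: "\<K> \<subseteq> KX SX" and ff: "filtered_family \<K>"
  shows "\<Inter>\<K> \<in> KX SX"
proof -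
  have Kne: "\<K> \<noteq> {}" using ff unfolding filtered_family_def by blast
  have ne: "\<Inter>\<K> \<noteq> {}"
  proof
    assume e: "\<Inter>\<K> = {}"
    have o: "openin SX ({}::'a set)" by simp
    have i: "\<Inter>\<K> \<subseteq> {}" using e by simp
    have "\<exists>K\<in>\<K>. K \<subseteq> {}" using wf_rule[OF WF o sub ff i] .
    then obtain K where "K \<in> \<K>" "K \<subseteq> {}" by blast
    then show False using sub KX_sub by blast
  qed
  have up: "upper (\<Inter>\<K>)" using sub KX_sub unfolding upper_def by blast
  have cp: "compactin SX (\<Inter>\<K>)"
    unfolding compact_Sigma
  proof (intro allI impI)
    fix \<U> assume a: "(\<forall>U\<in>\<U>. openin SX U) \<and> \<Inter>\<K> \<subseteq> \<Union>\<U>"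
    then have "openin SX (\<Union>\<U>)" by blast
    then obtain K where K: "K \<in> \<K>" "K \<subseteq> \<Union>\<U>" using wf_rule[OF WF \<open>openin SX (\<Union>\<U>)\<close> sub ff] a by blast
    then have "compactin SX K" using sub KX_sub by blast
    then obtain \<F> where F: "finite \<F>" "\<F> \<subseteq> \<U>" "K \<subseteq> \<Union>\<F>" using K a unfolding compact_Sigma by meson
    have "\<Inter>\<K> \<subseteq> K" using K by blast
    then have "\<Inter>\<K> \<subseteq> \<Union>\<F>" using F(3) by (rule order_trans)
    then show "\<exists>\<F>. finite \<F> \<and> \<F> \<subseteq> \<U> \<and> \<Inter>\<K> \<subseteq> \<Union>\<F>" using F(1,2) by blast
  qed
  show ?thesis unfolding KX_Sigma using ne up cp by blast
qed

lemma dir_filtered: "directed_in (KX X) rev_incl D \<Longrightarrow> filtered_family D \<and> D \<subseteq> KX X"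
  unfolding directed_in_def filtered_family_def rev_incl_def by blast

lemma sup_KX_iff:
  fixes D :: "'a::order set set"
  assumes WF: "well_filtered (SX::'a::order topology)"
    and D: "directed_in (KX SX) rev_incl D"
  shows "is_sup_in (KX SX) rev_incl D s \<longleftrightarrow> s = \<Inter>D"
proof -
  have I: "\<Inter>D \<in> KX SX" using wf_inter[OF WF] dir_filtered[OF D] by blast
  show ?thesis
  proof
    assume s: "is_sup_in (KX SX) rev_incl D s"
    then have "s \<subseteq> \<Inter>D" unfolding is_sup_in_def rev_incl_def by blast
    moreover have "\<Inter>D \<subseteq> s" using s I unfolding is_sup_in_def rev_incl_def by blast
    ultimately show "s = \<Inter>D" by blast
  next
    assume "s = \<Inter>D"
    then show "is_sup_in (KX SX) rev_incl D s" using I unfolding is_sup_in_def rev_incl_def by blast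
  qed
qed

lemma dcpo_KX: assumes WF: "well_filtered (SX::'a::order topology)"
  shows "dcpo_on (KX (SX::'a topology)) rev_incl"
  unfolding dcpo_on_def using sup_KX_iff[OF WF] by auto

lemma wf_apply:
  fixes D :: "'a::order set set"
  assumes WF: "well_filtered (SX::'a::order topology)"
    and D: "directed_in (KX SX) rev_incl D" and s: "is_sup_in (KX SX) rev_incl D s"
    and U: "openin SX U" and sU: "s \<subseteq> U"
  shows "\<exists>d\<in>D. d \<subseteq> U"
proof -
  have "s = \<Inter>D" using sup_KX_iff[OF WF D] s by blast
  then show ?thesis using wf_rule[OF WF U, of D] sU dir_filtered[OF D] by blast
qed



lemma cs_lc:
  assumes WF: "well_filtered (SX::'a::order topology)"
    and CS: "continuous_semilattice_on (KX (SX::'a topology)) rev_incl"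
  shows "locally_compact_nb (SX::'a topology)"
  unfolding locally_compact_nb_def neighbourhood_base_of
proof (intro allI impI)
  fix U :: "'a set" and x assume Ux: "openin SX U \<and> x \<in> U"
  interpret P: po_on "KX (SX::'a topology)" rev_incl by (rule po_KX)
  have cont: "\<And>K. K \<in> KX (SX::'a topology) \<Longrightarrow> directed_in (KX SX) rev_incl (P.wbset K) \<and> is_sup_in (KX SX) rev_incl (P.wbset K) K"
    using CS unfolding continuous_semilattice_on_def P.wbset_def by blast
  define ux where "ux = {y. x \<le> y}"
  have uxK: "ux \<in> KX SX" unfolding ux_def by (rule upx_KX)
  have uxU: "ux \<subseteq> U" using Ux open_upper[of U] unfolding ux_def upper_def by blast
  obtain L where L: "L \<in> P.wbset ux" "L \<subseteq> U"
    using wf_apply[OF WF _ _ _ uxU] cont[OF uxK] Ux by blast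
  have LK: "L \<in> KX SX" and Lwb: "way_below_in (KX SX) rev_incl L ux" using L unfolding P.wbset_def by auto
  define Op where "Op = {y. way_below_in (KX (SX::'a topology)) rev_incl L {z. y \<le> z}}"
  have "scott_open UNIV (\<le>) Op"
    unfolding scott_open_def
  proof (intro conjI allI impI ballI)
    show "Op \<subseteq> UNIV" by simp
  next
    fix y z :: 'a assume y: "y \<in> Op" and yz: "y \<le> z"
    have "rev_incl {w. y \<le> w} {w. z \<le> w}" unfolding rev_incl_def using yz by (auto intro: order_trans)
    then show "z \<in> Op" using y P.wb_right[OF _ _ upx_KX upx_KX] unfolding Op_def by blast
  next
    fix D :: "'a set" and s assume a: "directed_in UNIV (\<le>) D \<and> is_sup_in UNIV (\<le>) D s \<and> s \<in> Op"
    have sK: "{z. s \<le> z} \<in> KX SX" by (rule upx_KX)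
    obtain M where M: "M \<in> KX SX" "way_below_in (KX SX) rev_incl L M" "way_below_in (KX SX) rev_incl M {z. s \<le> z}"
      using P.interpolate[OF cont _ LK sK] a unfolding Op_def by blast
    define DD where "DD = (\<lambda>d. {z. d \<le> z}) ` D"
    have DDdir: "directed_in (KX SX) rev_incl DD"
      unfolding directed_in_def
    proof (intro conjI ballI)
      show "DD \<subseteq> KX SX" unfolding DD_def using upx_KX by blast
      show "DD \<noteq> {}" using a unfolding DD_def directed_in_def by blast
    next
      fix A B assume "A \<in> DD" "B \<in> DD"
      then obtain d1 d2 where d: "d1 \<in> D" "d2 \<in> D" "A = {z. d1 \<le> z}" "B = {z. d2 \<le> z}" unfolding DD_def by blast
      then obtain d3 where d3: "d3 \<in> D" "d1 \<le> d3" "d2 \<le> d3" using a unfolding directed_in_def by blast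
      have "{z. d3 \<le> z} \<in> DD" using d3 unfolding DD_def by blast
      moreover have "rev_incl A {z. d3 \<le> z}" "rev_incl B {z. d3 \<le> z}"
        using d d3 unfolding rev_incl_def by (auto intro: order_trans)
      ultimately show "\<exists>C\<in>DD. rev_incl A C \<and> rev_incl B C" by blast
    qed
    have DDsup: "is_sup_in (KX SX) rev_incl DD {z. s \<le> z}"
      unfolding is_sup_in_def
    proof (intro conjI ballI impI)
      show "{z. s \<le> z} \<in> KX SX" by (rule sK)
    next
      fix A assume "A \<in> DD"
      then obtain d where d: "d \<in> D" "A = {z. d \<le> z}" unfolding DD_def by blast
      then have "d \<le> s" using a unfolding is_sup_in_def by blast
      then show "rev_incl A {z. s \<le> z}" using d unfolding rev_incl_def by (auto intro: order_trans)
    next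
      fix u assume u: "u \<in> KX SX" "\<forall>A\<in>DD. rev_incl A u"
      show "rev_incl {z. s \<le> z} u" unfolding rev_incl_def
      proof
        fix y assume "y \<in> u"
        then have "\<forall>d\<in>D. d \<le> y" using u unfolding DD_def rev_incl_def by blast
        then show "y \<in> {z. s \<le> z}" using a unfolding is_sup_in_def by blast
      qed
    qed
    obtain A where A: "A \<in> DD" "rev_incl M A"
      using M(3) DDdir DDsup P.refl[OF sK] unfolding way_below_in_def by blast
    then obtain d where d: "d \<in> D" "A = {z. d \<le> z}" unfolding DD_def by blast
    have "way_below_in (KX SX) rev_incl L A" using P.wb_right[OF M(2) A(2) M(1)] A(1) DDdir
      unfolding directed_in_def by blast
    then have "d \<in> Op" using d unfolding Op_def by blast
    then show "D \<inter> Op \<noteq> {}" using d by blast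
  qed
  then have Oo: "openin SX Op" by (simp add: openin_Sigma)
  have xO: "x \<in> Op" using Lwb unfolding Op_def ux_def by blast
  have OL: "Op \<subseteq> L"
  proof
    fix y assume "y \<in> Op"
    then have "rev_incl L {z. y \<le> z}" using P.wb_le[OF _ upx_KX] unfolding Op_def by blast
    then show "y \<in> L" unfolding rev_incl_def by blast
  qed
  have "compactin SX L" using LK KX_sub by blast
  then show "\<exists>U' V. openin SX U' \<and> compactin SX V \<and> x \<in> U' \<and> U' \<subseteq> V \<and> V \<subseteq> U"
    using Oo xO OL L(2) by blast
qed



lemma lc_nbhd:
  assumes LC: "locally_compact_nb (SX::'a::order topology)"
    and K: "K \<in> KX (SX::'a topology)" and W: "openin (SX::'a topology) W" and KW: "K \<subseteq> W"
  shows "\<exists>K'\<in>KX (SX::'a topology). \<exists>Op. openin (SX::'a topology) Op \<and> K \<subseteq> Op \<and> Op \<subseteq> K' \<and> K' \<subseteq> W"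
proof -
  have "\<forall>k\<in>K. \<exists>U V. openin SX U \<and> compactin SX V \<and> k \<in> U \<and> U \<subseteq> V \<and> V \<subseteq> W"
    using LC W KW unfolding locally_compact_nb_def neighbourhood_base_of by blast
  then obtain Uf Vf where UV: "\<And>k. k \<in> K \<Longrightarrow> openin SX (Uf k) \<and> compactin SX (Vf k) \<and> k \<in> Uf k \<and> Uf k \<subseteq> Vf k \<and> Vf k \<subseteq> W"
    by metis
  have Kc: "compactin SX K" using K KX_sub by blast
  have "K \<subseteq> \<Union>(Uf ` K)" using UV by blast
  moreover have "\<forall>U\<in>Uf ` K. openin SX U" using UV by blast
  ultimately obtain \<F> where F: "finite \<F>" "\<F> \<subseteq> Uf ` K" "K \<subseteq> \<Union>\<F>" using Kc unfolding compact_Sigma by meson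
  then obtain F where F2: "F \<subseteq> K" "finite F" "\<F> = Uf ` F" using finite_subset_image by metis
  define C where "C = \<Union>(Vf ` F)"
  have Cc: "compactin SX C" unfolding C_def
    using F2 UV by (intro compactin_Union) auto
  define Op where "Op = \<Union>(Uf ` F)"
  have Oo: "openin SX Op" unfolding Op_def using F2 UV by blast
  have KO: "K \<subseteq> Op" using F F2 unfolding Op_def by blast
  have OC: "Op \<subseteq> C" unfolding Op_def C_def using F2 UV by blast
  have CW: "C \<subseteq> W" unfolding C_def using F2 UV by blast
  have Wu: "upper W" using W open_upper by blast
  have "up C \<subseteq> W" using CW Wu unfolding up_def upper_def by blast
  moreover have "up C \<in> KX SX"
    unfolding KX_Sigma using compact_up[OF Cc] upper_up[of C] sub_up[of C] KO OC K KX_sub by blast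
  moreover have "Op \<subseteq> up C" using OC sub_up by blast
  ultimately show ?thesis using Oo KO by blast
qed

lemma wb_of_int:
  assumes WF: "well_filtered (SX::'a::order topology)"
    and K1: "K1 \<in> KX (SX::'a topology)" and K2: "K2 \<in> KX (SX::'a topology)"
    and Op: "openin (SX::'a topology) Op" "K2 \<subseteq> Op" "Op \<subseteq> K1"
  shows "way_below_in (KX (SX::'a topology)) rev_incl K1 K2"
  unfolding way_below_in_def
proof (intro allI impI)
  fix D s assume a: "directed_in (KX (SX::'a topology)) rev_incl D \<and> is_sup_in (KX SX) rev_incl D s \<and> rev_incl K2 s"
  then have "s \<subseteq> Op" using Op unfolding rev_incl_def by blast
  then obtain d where "d \<in> D" "d \<subseteq> Op" using wf_apply[OF WF _ _ Op(1)] a by blast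
  then show "\<exists>d\<in>D. rev_incl K1 d" using Op unfolding rev_incl_def by blast
qed

definition fam :: "('a::order) set \<Rightarrow> 'a set set" where
  "fam K = {L \<in> KX SX. \<exists>Op. openin SX Op \<and> K \<subseteq> Op \<and> Op \<subseteq> L}"

lemma fam_dir:
  assumes LC: "locally_compact_nb (SX::'a::order topology)" and K: "K \<in> KX (SX::'a topology)"
  shows "directed_in (KX (SX::'a topology)) rev_incl (fam K)"
  unfolding directed_in_def
proof (intro conjI ballI)
  show "fam K \<subseteq> KX SX" unfolding fam_def by blast
  have U: "openin (SX::'a topology) UNIV" using openin_topspace[of "SX::'a topology"] by (simp only: topspace_Sigma)
  obtain K' Op where "K' \<in> KX SX" "openin SX Op" "K \<subseteq> Op" "Op \<subseteq> K'"
    using lc_nbhd[OF LC K U] by blast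
  then have "K' \<in> fam K" unfolding fam_def by blast
  then show "fam K \<noteq> {}" by blast
next
  fix A B assume A: "A \<in> fam K" and B: "B \<in> fam K"
  obtain OA where OA: "openin SX OA" "K \<subseteq> OA" "OA \<subseteq> A" using A unfolding fam_def by blast
  obtain OB where OB: "openin SX OB" "K \<subseteq> OB" "OB \<subseteq> B" using B unfolding fam_def by blast
  have "openin SX (OA \<inter> OB)" using OA OB by blast
  then obtain C Op where C: "C \<in> KX SX" "openin SX Op" "K \<subseteq> Op" "Op \<subseteq> C" "C \<subseteq> OA \<inter> OB"
    using lc_nbhd[OF LC K] OA OB by (metis Int_greatest)
  then have "C \<in> fam K" unfolding fam_def by blast
  moreover have "rev_incl A C" "rev_incl B C" using C OA OB unfolding rev_incl_def by auto
  ultimately show "\<exists>C\<in>fam K. rev_incl A C \<and> rev_incl B C" by blast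
qed

lemma fam_sup:
  assumes LC: "locally_compact_nb (SX::'a::order topology)" and K: "K \<in> KX (SX::'a topology)"
  shows "is_sup_in (KX (SX::'a topology)) rev_incl (fam K) K"
  unfolding is_sup_in_def
proof (intro conjI ballI impI)
  show "K \<in> KX SX" by fact
next
  fix L assume "L \<in> fam K" then show "rev_incl L K" unfolding fam_def rev_incl_def by blast
next
  fix u assume u: "u \<in> KX SX" "\<forall>d\<in>fam K. rev_incl d u"
  show "rev_incl K u" unfolding rev_incl_def
  proof
    fix y assume yu: "y \<in> u"
    show "y \<in> K"
    proof (rule ccontr)
      assume yK: "y \<notin> K"
      have Ku: "upper K" using K KX_sub by blast
      have "K \<subseteq> {z. \<not> z \<le> y}" using Ku yK unfolding upper_def by blast
      then obtain C where C: "C \<in> fam K" "C \<subseteq> {z. \<not> z \<le> y}"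
        using lc_nbhd[OF LC K open_notbelow[of y]] unfolding fam_def by blast
      then have "u \<subseteq> C" using u unfolding rev_incl_def by blast
      then show False using C yu by blast
    qed
  qed
qed

lemma lc_Q:
  assumes WF: "well_filtered (SX::'a::order topology)" and LC: "locally_compact_nb (SX::'a::order topology)"
  shows "property_Q (SX::'a topology)"
  unfolding property_Q_def
proof (intro ballI iffI)
  fix K1 K2 assume K1: "K1 \<in> KX (SX::'a topology)" and K2: "K2 \<in> KX (SX::'a topology)"
  {
    assume wb: "way_below_in (KX SX) rev_incl K1 K2"
    obtain L where L: "L \<in> fam K2" "rev_incl K1 L"
      using wb fam_dir[OF LC K2] fam_sup[OF LC K2] unfolding way_below_in_def rev_incl_def by blast
    then obtain Op where Op: "openin SX Op" "K2 \<subseteq> Op" "Op \<subseteq> L" unfolding fam_def by blast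
    then have "Op \<subseteq> K1" using L unfolding rev_incl_def by blast
    then show "K2 \<subseteq> SX interior_of K1" using Op interior_of_maximal by blast
  }
  {
    assume "K2 \<subseteq> SX interior_of K1"
    then show "way_below_in (KX SX) rev_incl K1 K2"
      using wb_of_int[OF WF K1 K2 openin_interior_of[of SX K1]] interior_of_subset[of SX K1] by blast
  }
qed

lemma wbset_eq:
  assumes WF: "well_filtered (SX::'a::order topology)" and LC: "locally_compact_nb (SX::'a::order topology)"
    and K: "K \<in> KX (SX::'a topology)"
  shows "{L \<in> KX (SX::'a topology). way_below_in (KX SX) rev_incl L K} = fam K"
proof
  show "{L \<in> KX (SX::'a topology). way_below_in (KX SX) rev_incl L K} \<subseteq> fam K"
  proof
    fix L assume "L \<in> {L \<in> KX (SX::'a topology). way_below_in (KX SX) rev_incl L K}"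
    then have LK: "L \<in> KX SX" and wb: "way_below_in (KX SX) rev_incl L K" by auto
    have Q: "property_Q (SX::'a topology)" by (rule lc_Q[OF WF LC])
    have e: "way_below_in (KX SX) rev_incl L K \<longleftrightarrow> K \<subseteq> SX interior_of L"
      using bspec[OF bspec[OF Q[unfolded property_Q_def] LK] K] .
    have "K \<subseteq> SX interior_of L" using iffD1[OF e wb] .
    moreover have "openin SX (SX interior_of L)" by (rule openin_interior_of)
    moreover have "SX interior_of L \<subseteq> L" by (rule interior_of_subset)
    ultimately show "L \<in> fam K" using LK unfolding fam_def by blast
  qed
next
  show "fam K \<subseteq> {L \<in> KX (SX::'a topology). way_below_in (KX SX) rev_incl L K}"
  proof
    fix L assume "L \<in> fam K"
    then obtain Op where "L \<in> KX SX" "openin SX Op" "K \<subseteq> Op" "Op \<subseteq> L" unfolding fam_def by blast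
    then show "L \<in> {L \<in> KX (SX::'a topology). way_below_in (KX SX) rev_incl L K}"
      using wb_of_int[OF WF _ K] by blast
  qed
qed

lemma lc_CS:
  assumes WF: "well_filtered (SX::'a::order topology)" and LC: "locally_compact_nb (SX::'a::order topology)"
  shows "continuous_semilattice_on (KX (SX::'a topology)) rev_incl"
  unfolding continuous_semilattice_on_def
  using dcpo_KX[OF WF] wbset_eq[OF WF LC] fam_dir[OF LC] fam_sup[OF LC] by simp



lemma box_scott:
  assumes WF: "well_filtered (SX::'a::order topology)" and U: "openin (SX::'a topology) U"
  shows "scott_open (KX (SX::'a topology)) rev_incl (Box_set SX U)"
  unfolding scott_open_def
proof (intro conjI allI impI ballI)
  show "Box_set SX U \<subseteq> KX SX" unfolding Box_set_def by blast
next
  fix K L assume "K \<in> Box_set SX U" "L \<in> KX SX" "rev_incl K L"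
  then show "L \<in> Box_set SX U" unfolding Box_set_def rev_incl_def by blast
next
  fix D s assume a: "directed_in (KX (SX::'a topology)) rev_incl D \<and> is_sup_in (KX SX) rev_incl D s \<and> s \<in> Box_set SX U"
  then have "s \<subseteq> U" unfolding Box_set_def by blast
  then obtain d where d: "d \<in> D" "d \<subseteq> U" using wf_apply[OF WF _ _ U] a by blast
  then have "d \<in> KX SX" using a unfolding directed_in_def by blast
  then have "d \<in> Box_set SX U" using d unfolding Box_set_def by blast
  then show "D \<inter> Box_set SX U \<noteq> {}" using d by blast
qed

lemma lc_V:
  assumes WF: "well_filtered (SX::'a::order topology)" and LC: "locally_compact_nb (SX::'a::order topology)"
  shows "upper_vietoris (SX::'a topology) = scott_topology (KX (SX::'a topology)) rev_incl"
proof -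
  let ?B = "{Box_set (SX::'a topology) U | U. openin SX U}"
  have "\<And>\<U>. generate_topology_on ?B \<U> \<longleftrightarrow> scott_open (KX (SX::'a topology)) rev_incl \<U>"
  proof
    fix \<U> assume g: "generate_topology_on ?B \<U>"
    have i: "istopology (scott_open (KX (SX::'a topology)) rev_incl)" by (rule istop_scott)
    have b: "\<And>S. S \<in> ?B \<Longrightarrow> scott_open (KX (SX::'a topology)) rev_incl S" using box_scott[OF WF] by blast
    show "scott_open (KX (SX::'a topology)) rev_incl \<U>" by (rule generate_topology_on_coarsest[OF i b g])
  next
    fix \<U> assume U: "scott_open (KX (SX::'a topology)) rev_incl \<U>"
    have eq: "\<U> = \<Union>{Box_set SX (SX interior_of L) | L. L \<in> \<U>}"
    proof
      show "\<U> \<subseteq> \<Union>{Box_set SX (SX interior_of L) | L. L \<in> \<U>}"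
      proof
        fix K assume KU: "K \<in> \<U>"
        then have K: "K \<in> KX SX" using U unfolding scott_open_def by blast
        have "fam K \<inter> \<U> \<noteq> {}" using U fam_dir[OF LC K] fam_sup[OF LC K] KU unfolding scott_open_def by blast
        then obtain L where L: "L \<in> fam K" "L \<in> \<U>" by blast
        then obtain Op where Op: "openin SX Op" "K \<subseteq> Op" "Op \<subseteq> L" unfolding fam_def by blast
        have "Op \<subseteq> SX interior_of L" using Op interior_of_maximal by blast
        then have "K \<in> Box_set SX (SX interior_of L)" using K Op unfolding Box_set_def by blast
        then show "K \<in> \<Union>{Box_set SX (SX interior_of L) | L. L \<in> \<U>}" using L by blast
      qed
    next
      show "\<Union>{Box_set SX (SX interior_of L) | L. L \<in> \<U>} \<subseteq> \<U>"
      proof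
        fix M assume "M \<in> \<Union>{Box_set SX (SX interior_of L) | L. L \<in> \<U>}"
        then obtain L where L: "L \<in> \<U>" "M \<in> Box_set SX (SX interior_of L)" by blast
        then have "M \<in> KX SX" "rev_incl L M" using interior_of_subset[of SX L] unfolding Box_set_def rev_incl_def by auto
        then show "M \<in> \<U>" using U L unfolding scott_open_def by blast
      qed
    qed
    have "generate_topology_on ?B (\<Union>{Box_set SX (SX interior_of L) | L. L \<in> \<U>})"
    proof (rule generate_topology_on.UN)
      fix k assume "k \<in> {Box_set SX (SX interior_of L) | L. L \<in> \<U>}"
      then obtain L where "k = Box_set SX (SX interior_of L)" by blast
      moreover have "openin SX (SX interior_of L)" by simp
      ultimately have "k \<in> ?B" by blast
      then show "generate_topology_on ?B k" by (rule generate_topology_on.Basis)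
    qed
    then show "generate_topology_on ?B \<U>" using eq by simp
  qed
  then show ?thesis
    unfolding upper_vietoris_def
    by (simp add: topology_eq openin_topology_generated_by_iff openin_scott_topology)
qed

lemma dir_fin:
  assumes D: "directed_in {U. openin X U} (\<subseteq>) D" and F: "finite F" "F \<subseteq> D"
  shows "\<exists>d\<in>D. \<Union>F \<subseteq> d"
  using F
proof (induction F rule: finite_induct)
  case empty
  have "D \<noteq> {}" using D unfolding directed_in_def by blast
  then obtain d where "d \<in> D" by blast
  then show ?case by auto
next
  case (insert x F)
  have FD: "F \<subseteq> D" using insert.prems by simp
  from insert.IH[OF FD] obtain d where d: "d \<in> D" "\<Union>F \<subseteq> d" ..
  have xD: "x \<in> D" using insert.prems by simp
  have "\<forall>x\<in>D. \<forall>y\<in>D. \<exists>z\<in>D. x \<subseteq> z \<and> y \<subseteq> z" using D unfolding directed_in_def by blast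
  then have "\<exists>z\<in>D. x \<subseteq> z \<and> d \<subseteq> z" using xD d(1) by blast
  then obtain e where e: "e \<in> D" "x \<subseteq> e" "d \<subseteq> e" by blast
  have "\<Union>(insert x F) \<subseteq> e" using e d by auto
  then show ?case using e(1) by blast
qed

lemma sup_opens:
  assumes "is_sup_in {U. openin X U} (\<subseteq>) D s" "D \<subseteq> {U. openin X U}"
  shows "s = \<Union>D"
proof -
  have "openin X (\<Union>D)" using assms(2) by blast
  then have "s \<subseteq> \<Union>D" using assms(1) unfolding is_sup_in_def by blast
  moreover have "\<Union>D \<subseteq> s" using assms(1) unfolding is_sup_in_def by blast
  ultimately show ?thesis by blast
qed

lemma lc_CC:
  assumes LC: "locally_compact_nb (SX::'a::order topology)"
  shows "core_compact (SX::'a topology)"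
  unfolding core_compact_def Let_def
proof (intro ballI)
  interpret P: po_on "{U. openin (SX::'a topology) U}" "(\<subseteq>)" by (rule po_opens)
  fix U assume U: "U \<in> {U. openin (SX::'a topology) U}"
  show "is_sup_in {U. openin SX U} (\<subseteq>) {V \<in> {U. openin SX U}. way_below_in {U. openin SX U} (\<subseteq>) V U} U"
    unfolding is_sup_in_def
  proof (intro conjI ballI impI)
    show "U \<in> {U. openin SX U}" by fact
  next
    fix V assume "V \<in> {V \<in> {U. openin (SX::'a topology) U}. way_below_in {U. openin SX U} (\<subseteq>) V U}"
    then show "V \<subseteq> U" using P.wb_le U by blast
  next
    fix u assume u: "u \<in> {U. openin (SX::'a topology) U}"
      and ub: "\<forall>V\<in>{V \<in> {U. openin (SX::'a topology) U}. way_below_in {U. openin SX U} (\<subseteq>) V U}. V \<subseteq> u"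
    show "U \<subseteq> u"
    proof
      fix x assume xU: "x \<in> U"
      have nb: "\<forall>W x. openin (SX::'a topology) W \<and> x \<in> W \<longrightarrow> (\<exists>U V. openin SX U \<and> compactin SX V \<and> x \<in> U \<and> U \<subseteq> V \<and> V \<subseteq> W)"
        using LC unfolding locally_compact_nb_def neighbourhood_base_of by simp
      have Uo: "openin SX U" using U by simp
      obtain Op C where OC: "openin SX Op" "compactin SX C" "x \<in> Op" "Op \<subseteq> C" "C \<subseteq> U"
        using nb[rule_format, OF conjI[OF Uo xU]] by blast
      have "way_below_in {U. openin (SX::'a topology) U} (\<subseteq>) Op U"
        unfolding way_below_in_def
      proof (intro allI impI)
        fix D s assume a: "directed_in {U. openin (SX::'a topology) U} (\<subseteq>) D \<and> is_sup_in {U. openin SX U} (\<subseteq>) D s \<and> U \<subseteq> s"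
        have dirD: "directed_in {U. openin (SX::'a topology) U} (\<subseteq>) D" using a by (rule conjunct1)
        have sup: "is_sup_in {U. openin (SX::'a topology) U} (\<subseteq>) D s" using a by (metis (no_types))
        have DO: "D \<subseteq> {U. openin SX U}" using dirD unfolding directed_in_def by (rule conjunct1)
        have sD: "s = \<Union>D" using sup_opens[OF sup DO] .
        have Us: "U \<subseteq> s" using a by (metis (no_types))
        have CD: "C \<subseteq> \<Union>D" using OC(5) Us sD by simp
        have Do: "\<forall>U\<in>D. openin SX U" using DO by blast
        have "\<exists>F. finite F \<and> F \<subseteq> D \<and> C \<subseteq> \<Union>F"
          using OC(2)[unfolded compact_Sigma, rule_format, OF conjI[OF Do CD]] .
        then obtain F where F: "finite F" "F \<subseteq> D" "C \<subseteq> \<Union>F" by blast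
        from dir_fin[OF dirD F(1,2)] obtain d where d: "d \<in> D" "\<Union>F \<subseteq> d" ..
        have "Op \<subseteq> d" using OC(4) F(3) d(2) by (meson order_trans)
        then show "\<exists>d\<in>D. Op \<subseteq> d" using d(1) by (rule bexI)
      qed
      then have "Op \<in> {V \<in> {U. openin (SX::'a topology) U}. way_below_in {U. openin SX U} (\<subseteq>) V U}"
        using OC(1) by simp
      then have "Op \<subseteq> u" using bspec[OF ub] by blast
      then show "x \<in> u" using OC(3) by (rule subsetD)
    qed
  qed
qed



abbreviation wbo :: "('a::order) set \<Rightarrow> 'a set \<Rightarrow> bool" where
  "wbo A B \<equiv> way_below_in {U. openin (SX::'a topology) U} (\<subseteq>) A B"

lemma wbo_le: "wbo A B \<Longrightarrow> openin (SX::'a::order topology) B \<Longrightarrow> A \<subseteq> B"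
proof -
  assume a: "wbo A B" "openin (SX::'a topology) B"
  interpret P: po_on "{U. openin (SX::'a topology) U}" "(\<subseteq>)" by (rule po_opens)
  show "A \<subseteq> B" using P.wb_le[OF a(1)] a(2) by simp
qed

lemma V_anti:
  assumes "\<And>n. V (Suc n) \<subseteq> V n" "m \<le> n"
  shows "V n \<subseteq> V m"
  using assms(2)
proof (induction n)
  case 0 then show ?case by simp
next
  case (Suc n)
  show ?case
  proof (cases "m \<le> n")
    case True
    then have "V n \<subseteq> V m" using Suc.IH by simp
    then show ?thesis using assms(1)[of n] by (rule order_trans[rotated])
  next
    case False
    then have "m = Suc n" using Suc.prems by simp
    then show ?thesis by simp
  qed
qed

lemma chain_main:
  fixes V :: "nat \<Rightarrow> 'a::order set"
  assumes WF: "well_filtered (SX::'a topology)"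
    and Vo: "\<And>n. openin (SX::'a topology) (V n)"
    and Vwb: "\<And>n. wbo (V (Suc n)) (V n)"
    and G: "openin (SX::'a topology) G" and KG: "\<Inter>(range V) \<subseteq> G"
  shows "\<exists>n. V n \<subseteq> G"
proof (rule ccontr)
  assume nG: "\<not> (\<exists>n. V n \<subseteq> G)"
  have Vsub: "\<And>n. V (Suc n) \<subseteq> V n" using wbo_le Vwb Vo by blast
  have Vanti: "\<And>m n. m \<le> n \<Longrightarrow> V n \<subseteq> V m" using V_anti[of V, OF Vsub] by blast
  define A where "A = {Q. openin (SX::'a topology) Q \<and> G \<subseteq> Q \<and> (\<forall>n. \<not> V n \<subseteq> Q)}"
  have "\<forall>C\<in>chains A. \<exists>Ub\<in>A. \<forall>X\<in>C. X \<subseteq> Ub"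
  proof
    fix C assume C: "C \<in> chains A"
    have CA: "C \<subseteq> A" using C unfolding chains_def by blast
    have Cch: "\<forall>X\<in>C. \<forall>Y\<in>C. X \<subseteq> Y \<or> Y \<subseteq> X" using C unfolding chains_def chain_subset_def by blast
    have Co: "\<forall>X\<in>C. openin SX X" using CA unfolding A_def by blast
    have CG: "\<forall>X\<in>C. G \<subseteq> X" using CA unfolding A_def by blast
    define Ub where "Ub = G \<union> \<Union>C"
    have Ubo: "openin SX Ub" unfolding Ub_def using G Co by blast
    have "\<forall>n. \<not> V n \<subseteq> Ub"
    proof (intro allI notI)
      fix n assume Vn: "V n \<subseteq> Ub"
      define D where "D = insert G C"
      have Dd: "directed_in {U. openin (SX::'a topology) U} (\<subseteq>) D"
        unfolding directed_in_def
      proof (intro conjI ballI)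
        show "D \<subseteq> {U. openin SX U}" unfolding D_def using G Co by blast
        show "D \<noteq> {}" unfolding D_def by blast
      next
        fix X Y assume "X \<in> D" "Y \<in> D"
        then show "\<exists>Z\<in>D. X \<subseteq> Z \<and> Y \<subseteq> Z"
          unfolding D_def using CG Cch by (metis insert_iff order_refl)
      qed
      have Ds: "is_sup_in {U. openin (SX::'a topology) U} (\<subseteq>) D Ub"
        unfolding is_sup_in_def D_def Ub_def using Ubo Ub_def by blast
      obtain d where d: "d \<in> D" "V (Suc n) \<subseteq> d"
        using Vwb[of n, unfolded way_below_in_def, rule_format, OF conjI[OF Dd conjI[OF Ds Vn]]] by blast
      show False
      proof (cases "d = G")
        case True then show False using d nG by blast
      next
        case False
        then have "d \<in> C" using d unfolding D_def by blast
        then have "d \<in> A" using CA by blast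
        then show False using d unfolding A_def by blast
      qed
    qed
    moreover have "G \<subseteq> Ub" unfolding Ub_def by blast
    ultimately have "Ub \<in> A" unfolding A_def using Ubo by blast
    moreover have "\<forall>X\<in>C. X \<subseteq> Ub" unfolding Ub_def by blast
    ultimately show "\<exists>Ub\<in>A. \<forall>X\<in>C. X \<subseteq> Ub" by blast
  qed
  from Zorn_Lemma2[OF this] obtain Q where Q: "Q \<in> A" and Qmax: "\<forall>X\<in>A. Q \<subseteq> X \<longrightarrow> X = Q" by blast
  have Qo: "openin SX Q" and GQ: "G \<subseteq> Q" and QV: "\<forall>n. \<not> V n \<subseteq> Q" using Q unfolding A_def by auto
  have maxp: "\<And>O'. openin SX O' \<Longrightarrow> \<not> O' \<subseteq> Q \<Longrightarrow> \<exists>n. V n \<subseteq> Q \<union> O'"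
  proof (rule ccontr)
    fix O' assume O': "openin SX O'" "\<not> O' \<subseteq> Q" and nn: "\<not> (\<exists>n. V n \<subseteq> Q \<union> O')"
    have "Q \<union> O' \<in> A" unfolding A_def using Qo O' GQ nn by blast
    then have "Q \<union> O' = Q" using Qmax by blast
    then show False using O' by blast
  qed
  have "\<forall>n. \<exists>y. y \<in> V n \<and> y \<notin> Q" using QV by blast
  then obtain c where c: "\<And>n. c n \<in> V n \<and> c n \<notin> Q" by metis
  define T where "T = (\<lambda>m. up (c ` {k. m \<le> k}))"
  have Tmono: "\<And>m m'. m \<le> m' \<Longrightarrow> T m' \<subseteq> T m"
  proof
    fix m m' y assume mm: "(m::nat) \<le> m'" and "y \<in> T m'"
    then obtain k where k: "m' \<le> k" "c k \<le> y" unfolding T_def up_def by blast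
    then have "m \<le> k" using mm by simp
    then show "y \<in> T m" using k unfolding T_def up_def by blast
  qed
  have cT: "\<And>m. c m \<in> T m" unfolding T_def up_def by blast
  have Tc: "\<And>m. compactin SX (c ` {k. m \<le> k})"
    unfolding compact_Sigma
  proof (intro allI impI)
    fix m and \<U> :: "'a set set" assume a: "(\<forall>U\<in>\<U>. openin SX U) \<and> c ` {k. m \<le> k} \<subseteq> \<Union>\<U>"
    have "\<forall>k\<in>{k. m \<le> k}. \<exists>U\<in>\<U>. c k \<in> U" using a by blast
    then obtain h where h: "\<And>k. k \<in> {k. m \<le> k} \<Longrightarrow> h k \<in> \<U> \<and> c k \<in> h k" by metis
    have hm: "h m \<in> \<U>" "c m \<in> h m" using h[of m] by auto
    have hmo: "openin SX (h m)" using a hm by blast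
    have "\<not> h m \<subseteq> Q" using hm c[of m] by blast
    then obtain n where n: "V n \<subseteq> Q \<union> h m" using maxp[OF hmo] by blast
    define N where "N = max m n"
    define F where "F = insert (h m) (h ` {m..<N})"
    have "finite F" unfolding F_def by simp
    moreover have "F \<subseteq> \<U>" unfolding F_def using h hm by auto
    moreover have "c ` {k. m \<le> k} \<subseteq> \<Union>F"
    proof
      fix y assume "y \<in> c ` {k. m \<le> k}"
      then obtain k where k: "m \<le> k" "y = c k" by blast
      show "y \<in> \<Union>F"
      proof (cases "k < N")
        case True
        then have "h k \<in> F" unfolding F_def using k by auto
        then show ?thesis using h[of k] k by auto
      next
        case False
        then have "n \<le> k" unfolding N_def by simp
        then have "c k \<in> V n" using c[of k] Vanti[of n k] by blast
        then have "c k \<in> h m" using n c[of k] by blast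
        then show ?thesis unfolding F_def using k by blast
      qed
    qed
    ultimately show "\<exists>\<F>. finite \<F> \<and> \<F> \<subseteq> \<U> \<and> c ` {k. m \<le> k} \<subseteq> \<Union>\<F>" by blast
  qed
  have TK: "\<And>m. T m \<in> KX SX"
  proof -
    fix m
    have "compactin SX (T m)" unfolding T_def by (rule compact_up[OF Tc])
    moreover have "upper (T m)" unfolding T_def by (rule upper_up)
    moreover have "T m \<noteq> {}" using cT by blast
    ultimately show "T m \<in> KX SX" unfolding KX_Sigma by blast
  qed
  have ff: "filtered_family (range T)"
    unfolding filtered_family_def
  proof (intro conjI ballI)
    show "range T \<noteq> {}" by simp
  next
    fix K1 K2 assume "K1 \<in> range T" "K2 \<in> range T"
    then obtain i j where ij: "K1 = T i" "K2 = T j" by blast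
    have "T (max i j) \<subseteq> K1" "T (max i j) \<subseteq> K2" unfolding ij using Tmono by auto
    then show "\<exists>K3\<in>range T. K3 \<subseteq> K1 \<and> K3 \<subseteq> K2" by blast
  qed
  have rT: "range T \<subseteq> KX SX" using TK by blast
  have "\<not> \<Inter>(range T) \<subseteq> Q"
  proof
    assume "\<Inter>(range T) \<subseteq> Q"
    then obtain K where "K \<in> range T" "K \<subseteq> Q" using wf_rule[OF WF Qo rT ff] by blast
    then obtain m where "T m \<subseteq> Q" by blast
    then show False using cT[of m] c[of m] by blast
  qed
  then obtain y where y: "y \<in> \<Inter>(range T)" "y \<notin> Q" by blast
  have "y \<in> \<Inter>(range V)"
  proof
    fix n assume "n \<in> (UNIV::nat set)"
    have "y \<in> T n" using y by blast
    then obtain k where k: "n \<le> k" "c k \<le> y" unfolding T_def up_def by blast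
    have "c k \<in> V n" using c[of k] Vanti[OF k(1)] by blast
    moreover have "upper (V n)" using Vo open_upper by blast
    ultimately show "y \<in> V n" using k unfolding upper_def by blast
  qed
  then show False using y KG GQ by blast
qed



lemma chain_compact:
  fixes V :: "nat \<Rightarrow> 'a::order set"
  assumes WF: "well_filtered (SX::'a topology)"
    and Vo: "\<And>n. openin (SX::'a topology) (V n)"
    and Vwb: "\<And>n. wbo (V (Suc n)) (V n)"
  shows "compactin (SX::'a topology) (\<Inter>(range V))"
  unfolding compact_Sigma
proof (intro allI impI)
  fix \<U> :: "'a set set" assume a: "(\<forall>U\<in>\<U>. openin SX U) \<and> \<Inter>(range V) \<subseteq> \<Union>\<U>"
  have Uo: "openin SX (\<Union>\<U>)" using a by blast
  obtain n where n: "V n \<subseteq> \<Union>\<U>" using chain_main[of V, OF WF Vo Vwb Uo] a by blast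
  define DD where "DD = {\<Union>F | F. finite F \<and> F \<subseteq> \<U>}"
  have DDd: "directed_in {U. openin (SX::'a topology) U} (\<subseteq>) DD"
    unfolding directed_in_def
  proof (intro conjI ballI)
    show "DD \<subseteq> {U. openin SX U}" unfolding DD_def using a by blast
    have "\<Union>{} \<in> DD" unfolding DD_def by blast
    then show "DD \<noteq> {}" by blast
  next
    fix X Y assume "X \<in> DD" "Y \<in> DD"
    then obtain F1 F2 where F: "X = \<Union>F1" "finite F1" "F1 \<subseteq> \<U>" "Y = \<Union>F2" "finite F2" "F2 \<subseteq> \<U>"
      unfolding DD_def by blast
    then have "\<Union>(F1 \<union> F2) \<in> DD" unfolding DD_def by blast
    moreover have "X \<subseteq> \<Union>(F1 \<union> F2)" "Y \<subseteq> \<Union>(F1 \<union> F2)" using F by auto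
    ultimately show "\<exists>Z\<in>DD. X \<subseteq> Z \<and> Y \<subseteq> Z" by blast
  qed
  have DDs: "is_sup_in {U. openin (SX::'a topology) U} (\<subseteq>) DD (\<Union>\<U>)"
    unfolding is_sup_in_def
  proof (intro conjI ballI impI)
    show "\<Union>\<U> \<in> {U. openin SX U}" using Uo by simp
  next
    fix d assume "d \<in> DD" then show "d \<subseteq> \<Union>\<U>" unfolding DD_def by blast
  next
    fix u assume u: "\<forall>d\<in>DD. d \<subseteq> u"
    show "\<Union>\<U> \<subseteq> u"
    proof
      fix x assume "x \<in> \<Union>\<U>"
      then obtain U where U: "U \<in> \<U>" "x \<in> U" by blast
      then have "\<Union>{U} \<in> DD" unfolding DD_def by blast
      then have "\<Union>{U} \<subseteq> u" using bspec[OF u] by blast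
      then show "x \<in> u" using U(2) by auto
    qed
  qed
  obtain d where d: "d \<in> DD" "V (Suc n) \<subseteq> d"
    using Vwb[of n, unfolded way_below_in_def, rule_format, OF conjI[OF DDd conjI[OF DDs n]]] by blast
  then obtain F where F: "d = \<Union>F" "finite F" "F \<subseteq> \<U>" unfolding DD_def by blast
  have "\<Inter>(range V) \<subseteq> V (Suc n)" by blast
  then have "\<Inter>(range V) \<subseteq> \<Union>F" using d F by blast
  then show "\<exists>\<F>. finite \<F> \<and> \<F> \<subseteq> \<U> \<and> \<Inter>(range V) \<subseteq> \<Union>\<F>" using F by blast
qed

lemma wbo_dir:
  assumes U: "openin (SX::'a::order topology) U"
  shows "directed_in {U. openin (SX::'a topology) U} (\<subseteq>) {V\<in>{U. openin (SX::'a topology) U}. wbo V U}"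
  unfolding directed_in_def
proof (intro conjI ballI)
  show "{V\<in>{U. openin (SX::'a topology) U}. wbo V U} \<subseteq> {U. openin SX U}" by blast
  have "wbo {} U" unfolding way_below_in_def directed_in_def by (metis empty_subsetI equals0I)
  then have "{} \<in> {V\<in>{U. openin (SX::'a topology) U}. wbo V U}" by simp
  then show "{V\<in>{U. openin (SX::'a topology) U}. wbo V U} \<noteq> {}" by (metis empty_iff)
next
  fix A B assume A: "A \<in> {V\<in>{U. openin (SX::'a topology) U}. wbo V U}" and B: "B \<in> {V\<in>{U. openin (SX::'a topology) U}. wbo V U}"
  have "wbo (A \<union> B) U"
    unfolding way_below_in_def
  proof (intro allI impI)
    fix D s assume a: "directed_in {U. openin (SX::'a topology) U} (\<subseteq>) D \<and> is_sup_in {U. openin SX U} (\<subseteq>) D s \<and> U \<subseteq> s"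
    obtain d1 where d1: "d1 \<in> D" "A \<subseteq> d1" using A a unfolding way_below_in_def by blast
    obtain d2 where d2: "d2 \<in> D" "B \<subseteq> d2" using B a unfolding way_below_in_def by blast
    have "directed_in {U. openin (SX::'a topology) U} (\<subseteq>) D" using a by (rule conjunct1)
    then have "\<forall>x\<in>D. \<forall>y\<in>D. \<exists>z\<in>D. x \<subseteq> z \<and> y \<subseteq> z" unfolding directed_in_def by (elim conjE)
    then obtain d3 where "d3 \<in> D" "d1 \<subseteq> d3" "d2 \<subseteq> d3" using d1(1) d2(1) by blast
    then show "\<exists>d\<in>D. A \<union> B \<subseteq> d" using d1 d2 by blast
  qed
  moreover have "openin SX (A \<union> B)" using A B by blast
  ultimately have "A \<union> B \<in> {V\<in>{U. openin (SX::'a topology) U}. wbo V U}" by blast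
  then show "\<exists>C\<in>{V\<in>{U. openin (SX::'a topology) U}. wbo V U}. A \<subseteq> C \<and> B \<subseteq> C" by blast
qed

lemma cc_lc:
  assumes WF: "well_filtered (SX::'a::order topology)" and CC: "core_compact (SX::'a topology)"
  shows "locally_compact_nb (SX::'a topology)"
  unfolding locally_compact_nb_def neighbourhood_base_of
proof (intro allI impI)
  fix U :: "'a set" and x assume Ux: "openin SX U \<and> x \<in> U"
  interpret P: po_on "{U. openin (SX::'a topology) U}" "(\<subseteq>)" by (rule po_opens)
  have sup: "\<And>U. openin (SX::'a topology) U \<Longrightarrow> is_sup_in {U. openin (SX::'a topology) U} (\<subseteq>) {V\<in>{U. openin (SX::'a topology) U}. wbo V U} U"
    using CC unfolding core_compact_def Let_def by blast
  have cont: "\<And>A. A \<in> {U. openin (SX::'a topology) U} \<Longrightarrow>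
     directed_in {U. openin (SX::'a topology) U} (\<subseteq>) (P.wbset A) \<and> is_sup_in {U. openin (SX::'a topology) U} (\<subseteq>) (P.wbset A) A"
    unfolding P.wbset_def using sup wbo_dir by blast
  have Uo: "openin SX U" using Ux by blast
  obtain W where W: "openin SX W" "wbo W U" "x \<in> W"
  proof -
    let ?S = "{V\<in>{U. openin (SX::'a topology) U}. wbo V U}"
    have o: "\<Union>?S \<in> {U. openin (SX::'a topology) U}" by blast
    have l: "\<forall>u\<in>{U. openin (SX::'a topology) U}. (\<forall>d\<in>?S. d \<subseteq> u) \<longrightarrow> U \<subseteq> u"
      using sup[OF Uo] unfolding is_sup_in_def by (elim conjE)
    have "\<forall>d\<in>?S. d \<subseteq> \<Union>?S" by blast
    then have "U \<subseteq> \<Union>?S" using bspec[OF l o] by blast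
    then have "x \<in> \<Union>?S" using Ux by blast
    then obtain W where W1: "W \<in> ?S" "x \<in> W" by (rule UnionE)
    have "openin SX W" "wbo W U" using W1(1) by simp_all
    then show ?thesis using that W1(2) by blast
  qed
  have "\<forall>A\<in>{U. openin (SX::'a topology) U}. wbo W A \<longrightarrow> (\<exists>B\<in>{U. openin (SX::'a topology) U}. wbo W B \<and> wbo B A)"
    using P.interpolate[OF cont] W(1) by blast
  then obtain g where g: "\<And>A. A \<in> {U. openin (SX::'a topology) U} \<and> wbo W A \<Longrightarrow> g A \<in> {U. openin (SX::'a topology) U} \<and> wbo W (g A) \<and> wbo (g A) A"
    by metis
  define V where "V = (\<lambda>n. (g ^^ n) U)"
  have inv: "\<And>n. V n \<in> {U. openin (SX::'a topology) U} \<and> wbo W (V n)"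
  proof -
    fix n show "V n \<in> {U. openin (SX::'a topology) U} \<and> wbo W (V n)"
    proof (induction n)
      case 0 then show ?case unfolding V_def using Uo W by simp
    next
      case (Suc n)
      have "V (Suc n) = g (V n)" unfolding V_def by simp
      then show ?case using g[OF Suc.IH] by simp
    qed
  qed
  have Vo: "\<And>n. openin SX (V n)" using inv by blast
  have Vwb: "\<And>n. wbo (V (Suc n)) (V n)"
  proof -
    fix n
    have "V (Suc n) = g (V n)" unfolding V_def by simp
    then show "wbo (V (Suc n)) (V n)" using g[OF inv[of n]] by simp
  qed
  have Kc: "compactin SX (\<Inter>(range V))" by (rule chain_compact[of V, OF WF Vo Vwb])
  have WK: "W \<subseteq> \<Inter>(range V)" using inv wbo_le Vo by blast
  have KU: "\<Inter>(range V) \<subseteq> U"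
  proof -
    have "V 0 = U" unfolding V_def by simp
    then show ?thesis by blast
  qed
  show "\<exists>U' Va. openin SX U' \<and> compactin SX Va \<and> x \<in> U' \<and> U' \<subseteq> Va \<and> Va \<subseteq> U"
    using W(1,3) Kc WK KU by blast
qed


theorem mainTheorem8:
  assumes "dcpo_on (UNIV :: ('a::order) set) (\<le>)"
    and "well_filtered (Sigma_space :: 'a topology)"
  shows "(locally_compact_nb (Sigma_space :: 'a topology) \<longleftrightarrow>
            continuous_semilattice_on (KX (Sigma_space :: 'a topology)) rev_incl \<and>
            upper_vietoris (Sigma_space :: 'a topology) =
              scott_topology (KX (Sigma_space :: 'a topology)) rev_incl)
       \<and> (locally_compact_nb (Sigma_space :: 'a topology) \<longleftrightarrow>
            continuous_semilattice_on (KX (Sigma_space :: 'a topology)) rev_incl \<and>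
            property_Q (Sigma_space :: 'a topology))
       \<and> (locally_compact_nb (Sigma_space :: 'a topology) \<longleftrightarrow>
            continuous_semilattice_on (KX (Sigma_space :: 'a topology)) rev_incl)
       \<and> (locally_compact_nb (Sigma_space :: 'a topology) \<longleftrightarrow>
            core_compact (Sigma_space :: 'a topology))"
  proof -
  have WF: "well_filtered (Sigma_space :: 'a topology)" using assms(2) .
  have a: "locally_compact_nb (Sigma_space :: 'a topology) \<Longrightarrow> continuous_semilattice_on (KX (Sigma_space :: 'a topology)) rev_incl"
    by (rule lc_CS[OF WF])
  have b: "locally_compact_nb (Sigma_space :: 'a topology) \<Longrightarrow> upper_vietoris (Sigma_space :: 'a topology) = scott_topology (KX (Sigma_space :: 'a topology)) rev_incl"
    by (rule lc_V[OF WF])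
  have c: "locally_compact_nb (Sigma_space :: 'a topology) \<Longrightarrow> property_Q (Sigma_space :: 'a topology)"
    by (rule lc_Q[OF WF])
  have d: "continuous_semilattice_on (KX (Sigma_space :: 'a topology)) rev_incl \<Longrightarrow> locally_compact_nb (Sigma_space :: 'a topology)"
    by (rule cs_lc[OF WF])
  have e: "locally_compact_nb (Sigma_space :: 'a topology) \<Longrightarrow> core_compact (Sigma_space :: 'a topology)"
    by (rule lc_CC)
  have f: "core_compact (Sigma_space :: 'a topology) \<Longrightarrow> locally_compact_nb (Sigma_space :: 'a topology)"
    by (rule cc_lc[OF WF])
  show ?thesis
    using a b c d e f by meson
qed

end
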